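(* Let $1\le m<k$ and let $G$ be a complete $k$-partite graph in which exactly $m$ partite sets have cardinality $1$ and the remaining $k-m$ partite sets have cardinality at least $2$. Then $\rho_T(G)=k-m$.
   Context: Graphs are finite and simple. A complete $k$-partite graph is one whose vertex set is partitioned into $k$ nonempty independent sets (partite sets) such that two vertices are adjacent iff they lie in different partite sets. For $u,v\in(\mathbb{R}\cup\{\infty\})^k$ the min-plus tropical dot product is $u\odot v=\min_i(u_i+v_i)$. A min-plus $k$-tropical dot product representation of $G=(V,E)$ is a map $f:V\to(\mathbb{R}\cup\{\infty\})^k$ with a threshold $t>0$ such that for all distinct $x,y\in V$: $xy\in E$ iff $f(x)\odot f(y)\ge t$. $\rho_T(G)$ is the least $k\ge 1$ for which such a representation exists. *)

theory Defs
  imports Main "HOL-Library.Extended_Real"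
begin

text \<open>A finite simple graph: finite vertex set V, symmetric irreflexive adjacency E
  (only its restriction to V matters).\<close>
definition simple_graph :: "'a set \<Rightarrow> ('a \<Rightarrow> 'a \<Rightarrow> bool) \<Rightarrow> bool" where
  "simple_graph V E \<longleftrightarrow> finite V \<and> (\<forall>x y. E x y \<longrightarrow> E y x) \<and> (\<forall>x. \<not> E x x)"

definition complete_multipartite_partition ::
  "'a set \<Rightarrow> ('a \<Rightarrow> 'a \<Rightarrow> bool) \<Rightarrow> 'a set set \<Rightarrow> nat \<Rightarrow> bool" where
  "complete_multipartite_partition V E P k \<longleftrightarrow>
     finite P \<and> card P = k \<and> (\<forall>A\<in>P. A \<noteq> {}) \<and> \<Union>P = V \<and>
     (\<forall>A\<in>P. \<forall>B\<in>P. A \<noteq> B \<longrightarrow> A \<inter> B = {}) \<and>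
     (\<forall>x\<in>V. \<forall>y\<in>V. x \<noteq> y \<longrightarrow> (E x y \<longleftrightarrow> \<not> (\<exists>A\<in>P. x \<in> A \<and> y \<in> A)))"

text \<open>Vectors in (R \<union> {\<infinity>})^k are functions nat \<Rightarrow> ereal, coordinates 0..k-1,
  never equal to -\<infinity>.\<close>
definition trop_dot :: "nat \<Rightarrow> (nat \<Rightarrow> ereal) \<Rightarrow> (nat \<Rightarrow> ereal) \<Rightarrow> ereal" where
  "trop_dot k u v = Min ((\<lambda>i. u i + v i) ` {..<k})"

definition trop_rep :: "'a set \<Rightarrow> ('a \<Rightarrow> 'a \<Rightarrow> bool) \<Rightarrow> nat \<Rightarrow> ('a \<Rightarrow> nat \<Rightarrow> ereal) \<Rightarrow> real \<Rightarrow> bool" where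
  "trop_rep V E k f t \<longleftrightarrow> t > 0 \<and> (\<forall>x\<in>V. \<forall>i<k. f x i \<noteq> -\<infinity>) \<and>
     (\<forall>x\<in>V. \<forall>y\<in>V. x \<noteq> y \<longrightarrow> (E x y \<longleftrightarrow> trop_dot k (f x) (f y) \<ge> ereal t))"

definition has_trop_rep :: "'a set \<Rightarrow> ('a \<Rightarrow> 'a \<Rightarrow> bool) \<Rightarrow> nat \<Rightarrow> bool" where
  "has_trop_rep V E k \<longleftrightarrow> (\<exists>f t. trop_rep V E k f t)"

definition rho_T :: "'a set \<Rightarrow> ('a \<Rightarrow> 'a \<Rightarrow> bool) \<Rightarrow> nat" where
  "rho_T V E = (LEAST k. k \<ge> 1 \<and> has_trop_rep V E k)"

end

theory Submission
  imports Defs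
begin

lemma ereal_contra:
  fixes a b c d :: ereal
  assumes "a \<noteq> -\<infinity>" "b \<noteq> -\<infinity>" "c \<noteq> -\<infinity>" "d \<noteq> -\<infinity>"
    "a + b < ereal t" "c + d < ereal t" "ereal t \<le> a + c" "ereal t \<le> b + d"
  shows False
  using assms by (cases a; cases b; cases c; cases d; simp)

lemma trop_lt:
  assumes "k \<ge> 1" "trop_dot k u v < ereal t"
  shows "\<exists>i<k. u i + v i < ereal t"
proof -
  have "{..<k} \<noteq> {}" using assms by (auto simp: lessThan_empty_iff)
  then show ?thesis using assms(2) unfolding trop_dot_def
    by (subst (asm) Min_less_iff) (auto simp: lessThan_empty_iff)
qed

lemma trop_ge:
  assumes "k \<ge> 1" "ereal t \<le> trop_dot k u v" "i < k"
  shows "ereal t \<le> u i + v i"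
proof -
  have "{..<k} \<noteq> {}" using assms by (auto simp: lessThan_empty_iff)
  then show ?thesis using assms(2,3) unfolding trop_dot_def
    by (subst (asm) Min_ge_iff) auto
qed

lemma trop_rep_adj:
  assumes "trop_rep V E k f t" "x \<in> V" "y \<in> V" "x \<noteq> y"
  shows "E x y \<longleftrightarrow> ereal t \<le> trop_dot k (f x) (f y)"
  using assms unfolding trop_rep_def by simp

lemma trop_rep_fin:
  assumes "trop_rep V E k f t" "x \<in> V" "i < k"
  shows "f x i \<noteq> -\<infinity>"
  using assms unfolding trop_rep_def by simp

theorem mainTheorem15:
  fixes V :: "'a set" and E :: "'a \<Rightarrow> 'a \<Rightarrow> bool" and P :: "'a set set" and k m :: nat
  assumes "simple_graph V E"
    and "complete_multipartite_partition V E P k"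
    and "1 \<le> m" and "m < k"
    and "card {A \<in> P. card A = 1} = m"
    and "\<forall>A\<in>P. card A \<noteq> 1 \<longrightarrow> card A \<ge> 2"
  shows "rho_T V E = k - m"
proof -
  note P = assms(2)[unfolded complete_multipartite_partition_def]
 have adj: "\<And>x y. x \<in> V \<Longrightarrow> y \<in> V \<Longrightarrow> x \<noteq> y \<Longrightarrow> (E x y \<longleftrightarrow> \<not> (\<exists>A\<in>P. x \<in> A \<and> y \<in> A))"
    using P by blast
  have UP: "\<Union>P = V" using P by blast
  have disj: "\<And>A B. A \<in> P \<Longrightarrow> B \<in> P \<Longrightarrow> A \<noteq> B \<Longrightarrow> A \<inter> B = {}" using P by blast
  have finV: "finite V" using assms(1) simple_graph_def by auto
  have finP: "finite P" using P by auto
  define Q where "Q = {A \<in> P. card A \<noteq> 1}"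
  have PQ: "P = {A \<in> P. card A = 1} \<union> Q" "{A \<in> P. card A = 1} \<inter> Q = {}" unfolding Q_def by auto
  have cQ: "card Q = k - m"
    using card_Un_disjoint[of "{A \<in> P. card A = 1}" Q] PQ finP P assms(5)
    by (metis (no_types, lifting) Q_def add_diff_cancel_left' finite_Un)
  define n where "n = k - m"
  have n1: "n \<ge> 1" using assms n_def by auto
  have finQ: "finite Q" using finP Q_def by auto
  have finA: "\<And>A. A \<in> P \<Longrightarrow> finite A" using finV UP by (meson Union_upper finite_subset)
  have same2: "\<And>A x y. A \<in> P \<Longrightarrow> x \<in> A \<Longrightarrow> y \<in> A \<Longrightarrow> x \<noteq> y \<Longrightarrow> A \<in> Q"
  proof -
    fix A x y assume a: "A \<in> P" "x \<in> A" "y \<in> A" "x \<noteq> y"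
    have "card {x,y} \<le> card A" using a finA[OF a(1)] by (intro card_mono) auto
    then show "A \<in> Q" using a Q_def by auto
  qed
  have rep: "has_trop_rep V E n"
  proof -
    obtain h where h: "bij_betw h {0..<n} Q" using ex_bij_betw_nat_finite[OF finQ] cQ n_def by auto
    define f where "f x i = (if i < n \<and> x \<in> h i then (0::ereal) else 1)" for x i
    have key: "\<And>x y. x \<in> V \<Longrightarrow> y \<in> V \<Longrightarrow> x \<noteq> y \<Longrightarrow>
        (ereal 1 \<le> trop_dot n (f x) (f y)) \<longleftrightarrow> \<not> (\<exists>A\<in>P. x \<in> A \<and> y \<in> A)"
    proof
      fix x y assume xy: "x \<in> V" "y \<in> V" "x \<noteq> y" and ge: "ereal 1 \<le> trop_dot n (f x) (f y)"
      show "\<not> (\<exists>A\<in>P. x \<in> A \<and> y \<in> A)"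
      proof
        assume "\<exists>A\<in>P. x \<in> A \<and> y \<in> A"
        then obtain A where A: "A \<in> P" "x \<in> A" "y \<in> A" by auto
        then have "A \<in> Q" using same2 xy by auto
        then obtain j where j: "j < n" "h j = A" using h unfolding bij_betw_def by auto
        have "ereal 1 \<le> f x j + f y j" using trop_ge[OF n1 ge j(1)] .
        then show False using j A f_def by simp
      qed
    next
      fix x y assume xy: "x \<in> V" "y \<in> V" "x \<noteq> y" and ns: "\<not> (\<exists>A\<in>P. x \<in> A \<and> y \<in> A)"
      have "{..<n} \<noteq> {}" using n1 by (auto simp: lessThan_empty_iff)
      moreover have "\<forall>i<n. ereal 1 \<le> f x i + f y i"
      proof (intro allI impI)
        fix i assume i: "i < n"
        have "h i \<in> P" using h i Q_def unfolding bij_betw_def by auto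
        then have "\<not> (x \<in> h i \<and> y \<in> h i)" using ns by auto
        then show "ereal 1 \<le> f x i + f y i" unfolding f_def by auto
      qed
      ultimately show "ereal 1 \<le> trop_dot n (f x) (f y)" unfolding trop_dot_def
        by (subst Min_ge_iff) (auto simp: lessThan_empty_iff)
    qed
    have "trop_rep V E n f 1"
      unfolding trop_rep_def
    proof (intro conjI ballI allI impI)
      fix x y assume "x \<in> V" "y \<in> V" "x \<noteq> y"
      then show "E x y = (ereal 1 \<le> trop_dot n (f x) (f y))" using key adj by simp
    qed (auto simp: f_def)
    then show ?thesis unfolding has_trop_rep_def by blast
  qed
  have low: "n \<le> k'" if k1: "k' \<ge> 1" and hr: "has_trop_rep V E k'" for k'
  proof -
    obtain f t where ft: "trop_rep V E k' f t" using hr unfolding has_trop_rep_def by blast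
    have fin: "\<And>x i. x \<in> V \<Longrightarrow> i < k' \<Longrightarrow> f x i \<noteq> -\<infinity>" using trop_rep_fin[OF ft] by blast
    have ex: "\<exists>x y i. x \<in> B \<and> y \<in> B \<and> x \<noteq> y \<and> i < k' \<and> f x i + f y i < ereal t" if B: "B \<in> Q" for B
    proof -
      have "card B \<ge> 2" using B Q_def assms(6) by auto
      then obtain x y where xy: "x \<in> B" "y \<in> B" "x \<noteq> y"
      proof -
        have "finite B" "\<not> card B \<le> Suc 0" using \<open>card B \<ge> 2\<close> card.infinite by force+
        then have "\<exists>x\<in>B. \<exists>y\<in>B. x \<noteq> y" using card_le_Suc0_iff_eq[of B] by auto
        then show ?thesis using that by blast
      qed
      have BP: "B \<in> P" using B Q_def by auto
      have V: "x \<in> V" "y \<in> V" using xy BP UP by auto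
      have "\<not> E x y" using adj V xy BP by blast
      moreover have "E x y \<longleftrightarrow> ereal t \<le> trop_dot k' (f x) (f y)" using trop_rep_adj[OF ft V xy(3)] .
      ultimately have "trop_dot k' (f x) (f y) < ereal t" by auto
      then show ?thesis using trop_lt[OF k1] xy by blast
    qed
    define R where "R B i = (\<exists>x y. x \<in> B \<and> y \<in> B \<and> x \<noteq> y \<and> i < k' \<and> f x i + f y i < ereal t)" for B i
    define c where "c B = (SOME i. R B i)" for B
    have c: "\<exists>x y. x \<in> B \<and> y \<in> B \<and> x \<noteq> y \<and> c B < k' \<and> f x (c B) + f y (c B) < ereal t" if "B \<in> Q" for B
    proof -
      have "\<exists>i. R B i" using ex[OF that] unfolding R_def by blast
      then have "R B (c B)" unfolding c_def by (rule someI_ex)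
      then show ?thesis unfolding R_def .
    qed
    have inj: "inj_on c Q"
    proof
      fix B C assume BC: "B \<in> Q" "C \<in> Q" "c B = c C"
      show "B = C"
      proof (rule ccontr)
        assume ne: "B \<noteq> C"
        obtain x y where xy: "x \<in> B" "y \<in> B" "x \<noteq> y" "c B < k'" "f x (c B) + f y (c B) < ereal t" using c[OF BC(1)] by blast
        obtain u w where uw: "u \<in> C" "w \<in> C" "u \<noteq> w" "f u (c B) + f w (c B) < ereal t" using c[OF BC(2)] unfolding BC(3)[symmetric] by blast
        have BP: "B \<in> P" "C \<in> P" using BC Q_def by auto
        have dis: "B \<inter> C = {}" using disj BP ne by auto
        have V: "x \<in> V" "y \<in> V" "u \<in> V" "w \<in> V" using xy uw BP UP by blast+
        have notsame: "\<And>a b. a \<in> B \<Longrightarrow> b \<in> C \<Longrightarrow> \<not> (\<exists>A\<in>P. a \<in> A \<and> b \<in> A)"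
        proof
          fix a b assume ab: "a \<in> B" "b \<in> C" and "\<exists>A\<in>P. a \<in> A \<and> b \<in> A"
          then obtain A where A: "A \<in> P" "a \<in> A" "b \<in> A" by blast
          have "A = B" using disj[OF A(1) BP(1)] A ab by blast
          moreover have "A = C" using disj[OF A(1) BP(2)] A ab by blast
          ultimately show False using ne by simp
        qed
        have xu: "x \<noteq> u" "y \<noteq> w" using dis xy uw by auto
        have E1: "E x u" "E y w"
          using adj[OF V(1) V(3) xu(1)] notsame[OF xy(1) uw(1)] adj[OF V(2) V(4) xu(2)] notsame[OF xy(2) uw(2)] by simp_all
        have d1: "ereal t \<le> trop_dot k' (f x) (f u)" using trop_rep_adj[OF ft V(1) V(3) xu(1)] E1(1) by simp
        have d2: "ereal t \<le> trop_dot k' (f y) (f w)" using trop_rep_adj[OF ft V(2) V(4) xu(2)] E1(2) by simp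
        have "ereal t \<le> f x (c B) + f u (c B)" "ereal t \<le> f y (c B) + f w (c B)"
          using trop_ge[OF k1 d1 xy(4)] trop_ge[OF k1 d2 xy(4)] by simp_all
        then show False using ereal_contra[of "f x (c B)" "f y (c B)" "f u (c B)" "f w (c B)" t]
          fin[OF V(1) xy(4)] fin[OF V(2) xy(4)] fin[OF V(3) xy(4)] fin[OF V(4) xy(4)] xy(5) uw(4) by blast
      qed
    qed
    have sub: "c ` Q \<subseteq> {..<k'}"
    proof
      fix i assume "i \<in> c ` Q"
      then obtain B where "B \<in> Q" "i = c B" by blast
      then show "i \<in> {..<k'}" using c[of B] by auto
    qed
    have "card Q \<le> card {..<k'}" using card_inj_on_le[OF inj sub] by simp
    then show ?thesis using cQ n_def by auto
  qed
  show ?thesis unfolding rho_T_def n_def[symmetric]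
    by (rule Least_equality) (use rep n1 low in auto)
qed

end
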